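(* Let $N$ be a positive integer, $S>0$, and let $u\mapsto \mathbf{s}(u)\in\mathbb{R}^N$, $u\in[0,1)$, be a measurable map with $\|\mathbf{s}(u)\|=S$ for all $u$. Let $\theta\in(0,\frac{\pi}{2})$. Then there exists a unit vector $\mathbf{g}\in\mathbb{R}^N$ such that the Lebesgue measure of the set $\{u\in[0,1):\ \langle \mathbf{s}(u),\mathbf{g}\rangle\ge S\cos\theta\}$ is at least \[ \exp\left\{ \frac{N}{2}\cdot\left[\log\left(\sin^{2}\theta\right)-\Theta\left(\frac{\log N}{N}\right)\right]\right\}, \] where the $\Theta(\frac{\log N}{N})$ term depends only on $N$ and $\theta$ (not on the map $\mathbf{s}$).
   Context: In the paper, $S=\sqrt{PT}$, $N=2WT$, and $\mathbf{s}(u)$ is the coefficient vector of the transmitted signal of a band-limited modulation system, normalized so that the power constraint holds with equality. $\langle\cdot,\cdot\rangle$ is the standard inner product; logarithms are natural. *)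

theory Defs
  imports "HOL-Analysis.Analysis" "HOL-Library.Landau_Symbols"
begin

text \<open>Vectors in R^N are represented as functions nat => real, only indices i < N matter.\<close>

definition vinner :: "nat \<Rightarrow> (nat \<Rightarrow> real) \<Rightarrow> (nat \<Rightarrow> real) \<Rightarrow> real" where
  "vinner N x y = (\<Sum>i<N. x i * y i)"

definition vnorm :: "nat \<Rightarrow> (nat \<Rightarrow> real) \<Rightarrow> real" where
  "vnorm N x = sqrt (\<Sum>i<N. (x i)\<^sup>2)"

end

theory Submission
  imports Defs "HOL-Real_Asymp.Real_Asymp"
begin


lemma shear1:
  fixes k :: "real \<times> real \<Rightarrow> ennreal"
  assumes [measurable]: "k \<in> borel_measurable (lborel \<Otimes>\<^sub>M lborel)"
  shows "(\<integral>\<^sup>+y. \<integral>\<^sup>+z. k (y + p*z, z) \<partial>lborel \<partial>lborel) = (\<integral>\<^sup>+y. \<integral>\<^sup>+z. k (y, z) \<partial>lborel \<partial>lborel)"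
proof -
  have "(\<integral>\<^sup>+y. \<integral>\<^sup>+z. k (y + p*z, z) \<partial>lborel \<partial>lborel) = (\<integral>\<^sup>+z. \<integral>\<^sup>+y. k (y + p*z, z) \<partial>lborel \<partial>lborel)"
  proof -
    have m: "(\<lambda>(z,y). k (y + p*z, z)) \<in> borel_measurable (lborel \<Otimes>\<^sub>M lborel)" by measurable
    show ?thesis using lborel_pair.Fubini'[OF m] by simp
  qed
  also have "\<dots> = (\<integral>\<^sup>+z. \<integral>\<^sup>+y. k (y, z) \<partial>lborel \<partial>lborel)"
  proof (rule nn_integral_cong)
    fix z
    show "(\<integral>\<^sup>+y. k (y + p*z, z) \<partial>lborel) = (\<integral>\<^sup>+y. k (y, z) \<partial>lborel)"
      using nn_integral_real_affine[of "\<lambda>y. k (y, z)" 1 "p*z"] by (simp add: add.commute)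
  qed
  also have "\<dots> = (\<integral>\<^sup>+y. \<integral>\<^sup>+z. k (y, z) \<partial>lborel \<partial>lborel)"
  proof -
    have m: "(\<lambda>(z,y). k (y, z)) \<in> borel_measurable (lborel \<Otimes>\<^sub>M lborel)" by measurable
    show ?thesis using lborel_pair.Fubini'[OF m] by simp
  qed
  finally show ?thesis .
qed

lemma shear2:
  fixes k :: "real \<times> real \<Rightarrow> ennreal"
  assumes [measurable]: "k \<in> borel_measurable (lborel \<Otimes>\<^sub>M lborel)"
  shows "(\<integral>\<^sup>+y. \<integral>\<^sup>+z. k (y, z + q*y) \<partial>lborel \<partial>lborel) = (\<integral>\<^sup>+y. \<integral>\<^sup>+z. k (y, z) \<partial>lborel \<partial>lborel)"
proof (rule nn_integral_cong)
  fix y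
  show "(\<integral>\<^sup>+z. k (y, z + q*y) \<partial>lborel) = (\<integral>\<^sup>+z. k (y, z) \<partial>lborel)"
    using nn_integral_real_affine[of "\<lambda>z. k (y, z)" 1 "q*y"] by (simp add: add.commute)
qed

lemma rot2:
  fixes k :: "real \<times> real \<Rightarrow> ennreal"
  assumes [measurable]: "k \<in> borel_measurable (lborel \<Otimes>\<^sub>M lborel)" and ab: "a\<^sup>2 + b\<^sup>2 = 1"
  shows "(\<integral>\<^sup>+y. \<integral>\<^sup>+z. k (a*y + b*z, -b*y + a*z) \<partial>lborel \<partial>lborel) = (\<integral>\<^sup>+y. \<integral>\<^sup>+z. k (y, z) \<partial>lborel \<partial>lborel)"
proof (cases "a = -1")
  case True
  then have b: "b = 0" using ab by (simp add: power2_eq_square)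
  have "(\<integral>\<^sup>+y. \<integral>\<^sup>+z. k (a*y + b*z, -b*y + a*z) \<partial>lborel \<partial>lborel) = (\<integral>\<^sup>+y. \<integral>\<^sup>+z. k (-y, -z) \<partial>lborel \<partial>lborel)"
    using True b by (simp)
  also have "\<dots> = (\<integral>\<^sup>+y. \<integral>\<^sup>+z. k (-y, z) \<partial>lborel \<partial>lborel)"
  proof (rule nn_integral_cong)
    fix y
    show "(\<integral>\<^sup>+z. k (-y, -z) \<partial>lborel) = (\<integral>\<^sup>+z. k (-y, z) \<partial>lborel)"
      using nn_integral_real_affine[of "\<lambda>z. k (-y, z)" "-1" 0] by simp
  qed
  also have "\<dots> = (\<integral>\<^sup>+y. \<integral>\<^sup>+z. k (y, z) \<partial>lborel \<partial>lborel)"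
    using nn_integral_real_affine[of "\<lambda>y. \<integral>\<^sup>+z. k (y, z) \<partial>lborel" "-1" 0] by simp
  finally show ?thesis .
next
  case False
  then have a1: "1 + a \<noteq> 0" by linarith
  define p where "p = b / (1 + a)"
  define q where "q = -b"
  have pq: "1 + p*q = a" using ab a1 unfolding p_def q_def
    by (simp add: field_simps power2_eq_square)
  have pa: "p * (1 + a) = b" using a1 unfolding p_def by simp
  define k1 where "k1 = (\<lambda>(y,z). k (y + p*z, z))"
  define k2 where "k2 = (\<lambda>(y,z). k1 (y, z + q*y))"
  have [measurable]: "k1 \<in> borel_measurable (lborel \<Otimes>\<^sub>M lborel)" unfolding k1_def by measurable
  have [measurable]: "k2 \<in> borel_measurable (lborel \<Otimes>\<^sub>M lborel)" unfolding k2_def by measurable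
  have eq: "k (a*y + b*z, -b*y + a*z) = k2 (y + p*z, z)" for y z
  proof -
    have e1: "(y + p*z) + p*(z + q*(y + p*z)) = (1 + p*q)*y + (p*(1 + (1+p*q)))*z"
      by (simp add: algebra_simps)
    have "a*y + b*z = (y + p*z) + p*(z + q*(y + p*z))"
      unfolding e1 pq pa by simp
    moreover have e2: "z + q*(y + p*z) = q*y + (1+p*q)*z" by (simp add: algebra_simps)
    have "-b*y + a*z = z + q*(y + p*z)"
      unfolding e2 pq by (simp add: q_def)
    ultimately show ?thesis unfolding k2_def k1_def by simp
  qed
  have "(\<integral>\<^sup>+y. \<integral>\<^sup>+z. k (a*y + b*z, -b*y + a*z) \<partial>lborel \<partial>lborel) = (\<integral>\<^sup>+y. \<integral>\<^sup>+z. k2 (y + p*z, z) \<partial>lborel \<partial>lborel)"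
    by (rule nn_integral_cong)+ (rule eq)
  also have "\<dots> = (\<integral>\<^sup>+y. \<integral>\<^sup>+z. k2 (y, z) \<partial>lborel \<partial>lborel)" by (rule shear1) measurable
  also have "\<dots> = (\<integral>\<^sup>+y. \<integral>\<^sup>+z. k1 (y, z + q*y) \<partial>lborel \<partial>lborel)" by (simp add: k2_def)
  also have "\<dots> = (\<integral>\<^sup>+y. \<integral>\<^sup>+z. k1 (y, z) \<partial>lborel \<partial>lborel)" by (rule shear2) measurable
  also have "\<dots> = (\<integral>\<^sup>+y. \<integral>\<^sup>+z. k (y + p*z, z) \<partial>lborel \<partial>lborel)" by (simp add: k1_def)
  also have "\<dots> = (\<integral>\<^sup>+y. \<integral>\<^sup>+z. k (y, z) \<partial>lborel \<partial>lborel)" by (rule shear1) measurable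
  finally show ?thesis .
qed



definition rot :: "nat \<Rightarrow> nat \<Rightarrow> real \<Rightarrow> real \<Rightarrow> (nat \<Rightarrow> real) \<Rightarrow> (nat \<Rightarrow> real)" where
  "rot i j a b x = x(i := a * x i + b * x j, j := -b * x i + a * x j)"

lemma upd2_meas:
  assumes "i \<notin> B" "j \<notin> B" "i \<noteq> j"
  shows "(\<lambda>((y,z),w). w(j:=z, i:=y)) \<in> measurable ((lborel \<Otimes>\<^sub>M lborel) \<Otimes>\<^sub>M PiM B (\<lambda>_. lborel))
            (PiM (insert i (insert j B)) (\<lambda>_. lborel::real measure))"
proof -
  have "(\<lambda>p. \<lambda>k\<in>insert i (insert j B). if k = i then fst (fst p) else if k = j then snd (fst p) else snd p k)
     \<in> measurable ((lborel \<Otimes>\<^sub>M lborel) \<Otimes>\<^sub>M PiM B (\<lambda>_. lborel)) (PiM (insert i (insert j B)) (\<lambda>_. lborel::real measure))"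
    apply (rule measurable_restrict)
    subgoal for k using assms by (cases "k = i"; cases "k = j"; simp; measurable)
    done
  then show ?thesis
    apply (rule measurable_cong[THEN iffD1, rotated])
    using assms by (auto simp: space_pair_measure space_PiM PiE_def extensional_def fun_eq_iff)
qed

lemma upd1_meas:
  assumes "i \<notin> B"
  shows "(\<lambda>x. x(i:=y)) \<in> measurable (PiM B (\<lambda>_. lborel)) (PiM (insert i B) (\<lambda>_. lborel::real measure))"
proof -
  have "(\<lambda>x. \<lambda>k\<in>insert i B. if k = i then y else x k)
     \<in> measurable (PiM B (\<lambda>_. lborel)) (PiM (insert i B) (\<lambda>_. lborel::real measure))"
    apply (rule measurable_restrict)
    subgoal for k using assms by (cases "k = i"; simp; measurable)
    done
  then show ?thesis
    apply (rule measurable_cong[THEN iffD1, rotated])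
    using assms by (auto simp: space_PiM PiE_def extensional_def fun_eq_iff)
qed

lemma rot_meas:
  assumes "i \<in> A" "j \<in> A"
  shows "rot i j a b \<in> measurable (PiM A (\<lambda>_. lborel)) (PiM A (\<lambda>_. lborel::real measure))"
proof -
  have "(\<lambda>x. \<lambda>k\<in>A. if k = j then -b * x i + a * x j else if k = i then a * x i + b * x j else x k)
     \<in> measurable (PiM A (\<lambda>_. lborel)) (PiM A (\<lambda>_. lborel::real measure))"
    apply (rule measurable_restrict)
    subgoal for k using assms by (cases "k = i"; cases "k = j"; simp; measurable)
    done
  then show ?thesis
    apply (rule measurable_cong[THEN iffD1, rotated])
    using assms by (auto simp: space_PiM PiE_def extensional_def fun_eq_iff rot_def)
qed

lemma PiM_split2:
  fixes g :: "(nat \<Rightarrow> real) \<Rightarrow> ennreal"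
  assumes B: "finite B" "i \<notin> B" "j \<notin> B" "i \<noteq> j"
    and gm[measurable]: "g \<in> borel_measurable (PiM (insert i (insert j B)) (\<lambda>_. lborel))"
  shows "(\<integral>\<^sup>+x. g x \<partial>PiM (insert i (insert j B)) (\<lambda>_. lborel)) =
     (\<integral>\<^sup>+y. \<integral>\<^sup>+z. (\<integral>\<^sup>+w. g (w(j:=z, i:=y)) \<partial>PiM B (\<lambda>_. lborel)) \<partial>lborel \<partial>lborel)"
proof -
  interpret product_sigma_finite "\<lambda>_. lborel::real measure" by standard
  have "(\<integral>\<^sup>+x. g x \<partial>PiM (insert i (insert j B)) (\<lambda>_. lborel)) =
        (\<integral>\<^sup>+y. \<integral>\<^sup>+x. g (x(i:=y)) \<partial>PiM (insert j B) (\<lambda>_. lborel) \<partial>lborel)"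
    using B by (subst product_nn_integral_insert_rev) auto
  also have "\<dots> = (\<integral>\<^sup>+y. \<integral>\<^sup>+z. (\<integral>\<^sup>+w. g (w(j:=z, i:=y)) \<partial>PiM B (\<lambda>_. lborel)) \<partial>lborel \<partial>lborel)"
  proof (rule nn_integral_cong)
    fix y
    have m: "(\<lambda>x. g (x(i:=y))) \<in> borel_measurable (PiM (insert j B) (\<lambda>_. lborel))"
      using measurable_comp[OF upd1_meas[of i "insert j B" y] gm] B by (simp add: comp_def)
    show "(\<integral>\<^sup>+x. g (x(i:=y)) \<partial>PiM (insert j B) (\<lambda>_. lborel)) =
       (\<integral>\<^sup>+z. (\<integral>\<^sup>+w. g (w(j:=z, i:=y)) \<partial>PiM B (\<lambda>_. lborel)) \<partial>lborel)"
      using B m by (subst product_nn_integral_insert_rev) auto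
  qed
  finally show ?thesis .
qed

lemma givens:
  assumes fin: "finite A" and ij: "i \<in> A" "j \<in> A" "i \<noteq> j" and ab: "a\<^sup>2 + b\<^sup>2 = 1"
    and hm[measurable]: "h \<in> borel_measurable (PiM A (\<lambda>_. lborel::real measure))"
  shows "(\<integral>\<^sup>+x. h (rot i j a b x) \<partial>PiM A (\<lambda>_. lborel)) = (\<integral>\<^sup>+x. h x \<partial>PiM A (\<lambda>_. lborel))"
proof -
  define B where "B = A - {i,j}"
  have A: "A = insert i (insert j B)" and B: "finite B" "i \<notin> B" "j \<notin> B"
    using ij fin by (auto simp: B_def)
  interpret PB: product_sigma_finite "\<lambda>_. lborel::real measure" by standard
  interpret SB: sigma_finite_measure "PiM B (\<lambda>_. lborel::real measure)"
    using PB.sigma_finite[OF B(1)] .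
  have hm': "h \<in> borel_measurable (PiM (insert i (insert j B)) (\<lambda>_. lborel::real measure))"
    using hm A by simp
  have hr: "(\<lambda>x. h (rot i j a b x)) \<in> borel_measurable (PiM (insert i (insert j B)) (\<lambda>_. lborel::real measure))"
    using measurable_comp[OF rot_meas[OF ij(1,2), of a b] hm] A by (simp add: comp_def)
  define K where "K = (\<lambda>(y,z). \<integral>\<^sup>+w. h (w(j:=z, i:=y)) \<partial>PiM B (\<lambda>_. lborel))"
  have Km: "K \<in> borel_measurable (lborel \<Otimes>\<^sub>M lborel)"
  proof -
    have "(\<lambda>(p,w). h (w(j:=snd p, i:=fst p))) \<in> borel_measurable ((lborel \<Otimes>\<^sub>M lborel) \<Otimes>\<^sub>M PiM B (\<lambda>_. lborel))"
      using measurable_comp[OF upd2_meas[OF B(2,3) ij(3)] hm'] by (simp add: comp_def case_prod_beta')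
    from SB.borel_measurable_nn_integral_fst[OF this] show ?thesis
      unfolding K_def by (simp add: case_prod_beta')
  qed
  have upd: "rot i j a b (w(j:=z, i:=y)) = w(j := -b*y + a*z, i := a*y + b*z)" for w y z
    using ij(3) by (auto simp: rot_def fun_eq_iff)
  have "(\<integral>\<^sup>+x. h (rot i j a b x) \<partial>PiM A (\<lambda>_. lborel)) =
     (\<integral>\<^sup>+y. \<integral>\<^sup>+z. K (a*y + b*z, -b*y + a*z) \<partial>lborel \<partial>lborel)"
    unfolding A using PiM_split2[OF B ij(3) hr] by (simp add: upd K_def)
  also have "\<dots> = (\<integral>\<^sup>+y. \<integral>\<^sup>+z. K (y, z) \<partial>lborel \<partial>lborel)"
    by (rule rot2[OF Km ab])
  also have "\<dots> = (\<integral>\<^sup>+x. h x \<partial>PiM A (\<lambda>_. lborel))"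
    unfolding A using PiM_split2[OF B ij(3) hm'] by (simp add: K_def)
  finally show ?thesis .
qed



definition ipN :: "nat \<Rightarrow> (nat \<Rightarrow> real) \<Rightarrow> (nat \<Rightarrow> real) \<Rightarrow> real" where
  "ipN N t x = (\<Sum>i<N. t i * x i)"
definition sqN :: "nat \<Rightarrow> (nat \<Rightarrow> real) \<Rightarrow> real" where
  "sqN N x = (\<Sum>i<N. (x i)\<^sup>2)"

lemma sum_split2:
  assumes "finite A" "i \<in> A" "j \<in> A" "i \<noteq> j"
  shows "sum g A = g i + g j + sum g (A - {i,j})"
proof -
  have "A = insert i (insert j (A - {i,j}))" using assms by auto
  then have "sum g A = sum g (insert i (insert j (A - {i,j})))" by simp
  also have "\<dots> = g i + g j + sum g (A - {i,j})" using assms by (simp add: sum.insert_remove add.assoc)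
  finally show ?thesis .
qed

lemma rot_ip:
  assumes "i < N" "j < N" "i \<noteq> j" "a\<^sup>2 + b\<^sup>2 = 1"
  shows "ipN N (rot i j a b t) (rot i j a b x) = ipN N t x"
proof -
  have e: "(\<Sum>k\<in>{..<N} - {i,j}. rot i j a b t k * rot i j a b x k) = (\<Sum>k\<in>{..<N} - {i,j}. t k * x k)"
    by (rule sum.cong) (auto simp: rot_def)
  have alg: "(a * t i + b * t j) * (a * x i + b * x j) + (- b * t i + a * t j) * (- b * x i + a * x j)
     = (a\<^sup>2 + b\<^sup>2) * (t i * x i) + (a\<^sup>2 + b\<^sup>2) * (t j * x j)"
    by (simp add: algebra_simps power2_eq_square)
  show ?thesis unfolding ipN_def
    using assms e alg
    by (simp add: sum_split2[of "{..<N}" i j] rot_def)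
qed

lemma rot_sq:
  assumes "i < N" "j < N" "i \<noteq> j" "a\<^sup>2 + b\<^sup>2 = 1"
  shows "sqN N (rot i j a b x) = sqN N x"
proof -
  have e: "(\<Sum>k\<in>{..<N} - {i,j}. (rot i j a b x k)\<^sup>2) = (\<Sum>k\<in>{..<N} - {i,j}. (x k)\<^sup>2)"
    by (rule sum.cong) (auto simp: rot_def)
  have alg: "(a * x i + b * x j)\<^sup>2 + (- b * x i + a * x j)\<^sup>2
     = (a\<^sup>2 + b\<^sup>2) * (x i)\<^sup>2 + (a\<^sup>2 + b\<^sup>2) * (x j)\<^sup>2"
    by (simp add: algebra_simps power2_eq_square)
  show ?thesis unfolding sqN_def
    using assms e alg
    by (simp add: sum_split2[of "{..<N}" i j] rot_def)
qed

lemma reflect_inv: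
  assumes fin: "finite A" and i: "i \<in> A"
    and hm[measurable]: "h \<in> borel_measurable (PiM A (\<lambda>_. lborel::real measure))"
  shows "(\<integral>\<^sup>+x. h (x(i := - x i)) \<partial>PiM A (\<lambda>_. lborel)) = (\<integral>\<^sup>+x. h x \<partial>PiM A (\<lambda>_. lborel))"
proof -
  define B where "B = A - {i}"
  have A: "A = insert i B" and B: "finite B" "i \<notin> B" using fin i by (auto simp: B_def)
  interpret PB: product_sigma_finite "\<lambda>_. lborel::real measure" by standard
  have hm': "h \<in> borel_measurable (PiM (insert i B) (\<lambda>_. lborel))" using hm A by simp
  have rm: "(\<lambda>x. x(i := - x i)) \<in> measurable (PiM (insert i B) (\<lambda>_. lborel)) (PiM (insert i B) (\<lambda>_. lborel::real measure))"
  proof -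
    have "(\<lambda>x. \<lambda>k\<in>insert i B. if k = i then - x i else x k)
       \<in> measurable (PiM (insert i B) (\<lambda>_. lborel)) (PiM (insert i B) (\<lambda>_. lborel::real measure))"
      apply (rule measurable_restrict)
      subgoal for k by (cases "k = i"; simp; measurable)
      done
    then show ?thesis
      apply (rule measurable_cong[THEN iffD1, rotated])
      by (auto simp: space_PiM PiE_def extensional_def fun_eq_iff)
  qed
  have hr: "(\<lambda>x. h (x(i := - x i))) \<in> borel_measurable (PiM (insert i B) (\<lambda>_. lborel))"
    using measurable_comp[OF rm hm'] by (simp add: comp_def)
  define F where "F = (\<lambda>y. \<integral>\<^sup>+x. h (x(i:=y)) \<partial>PiM B (\<lambda>_. lborel))"
  have Fm: "F \<in> borel_measurable borel"
  proof -
    interpret SB: sigma_finite_measure "PiM B (\<lambda>_. lborel::real measure)"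
      using PB.sigma_finite[OF B(1)] .
    have "(\<lambda>(y,w). h (w(i:=y))) \<in> borel_measurable (lborel \<Otimes>\<^sub>M PiM B (\<lambda>_. lborel))"
    proof -
      have "(\<lambda>(y,w). \<lambda>k\<in>insert i B. if k = i then y else w k)
         \<in> measurable (lborel \<Otimes>\<^sub>M PiM B (\<lambda>_. lborel)) (PiM (insert i B) (\<lambda>_. lborel::real measure))"
        unfolding case_prod_beta'
        apply (rule measurable_restrict)
        subgoal for k by (cases "k = i"; simp; measurable)
        done
      then have "(\<lambda>(y,w). w(i:=y)) \<in> measurable (lborel \<Otimes>\<^sub>M PiM B (\<lambda>_. lborel)) (PiM (insert i B) (\<lambda>_. lborel::real measure))"
        apply (rule measurable_cong[THEN iffD1, rotated])
        using B by (auto simp: space_pair_measure space_PiM PiE_def extensional_def fun_eq_iff)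
      from measurable_comp[OF this hm'] show ?thesis by (simp add: comp_def case_prod_beta')
    qed
    from SB.borel_measurable_nn_integral_fst[OF this] show ?thesis
      unfolding F_def by (simp add: case_prod_beta')
  qed
  have "(\<integral>\<^sup>+x. h (x(i := - x i)) \<partial>PiM A (\<lambda>_. lborel)) = (\<integral>\<^sup>+y. F (-y) \<partial>lborel)"
    unfolding A using B hr by (subst PB.product_nn_integral_insert_rev) (auto simp: F_def)
  also have "\<dots> = (\<integral>\<^sup>+y. F y \<partial>lborel)"
    using nn_integral_real_affine[OF Fm, of "-1" 0] by simp
  also have "\<dots> = (\<integral>\<^sup>+x. h x \<partial>PiM A (\<lambda>_. lborel))"
    unfolding A using B hm' by (subst PB.product_nn_integral_insert_rev) (auto simp: F_def)
  finally show ?thesis .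
qed



lemma rot_reduce_aux:
  fixes f :: "real \<times> real \<Rightarrow> ennreal"
  assumes fm[measurable]: "f \<in> borel_measurable borel"
  shows "1 \<le> k \<Longrightarrow> k \<le> N \<Longrightarrow> \<forall>t. (\<forall>i. k \<le> i \<longrightarrow> i < N \<longrightarrow> t i = 0) \<longrightarrow> sqN N t = 1 \<longrightarrow>
    (\<integral>\<^sup>+x. f (ipN N t x, sqN N x) \<partial>PiM {..<N} (\<lambda>_. lborel)) = (\<integral>\<^sup>+x. f (x 0, sqN N x) \<partial>PiM {..<N} (\<lambda>_. lborel))"
proof (induction k)
  case 0
  then show ?case by simp
next
  case (Suc k)
  have hm: "(\<lambda>x. f (ipN N t x, sqN N x)) \<in> borel_measurable (PiM {..<N} (\<lambda>_. lborel))" for t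
    unfolding ipN_def sqN_def by measurable
  show ?case
  proof (cases "k = 0")
    case True
    show ?thesis
    proof (intro allI impI)
      fix t :: "nat \<Rightarrow> real"
      assume supp: "\<forall>i. Suc k \<le> i \<longrightarrow> i < N \<longrightarrow> t i = 0" and sq: "sqN N t = 1"
      have N0: "0 < N" using Suc.prems by simp
      have ip: "ipN N t x = t 0 * x 0" for x
      proof -
        have "ipN N t x = (\<Sum>i<N. if i = 0 then t 0 * x 0 else 0)"
          unfolding ipN_def by (rule sum.cong) (use supp True in auto)
        then show ?thesis using N0 by simp
      qed
      have "sqN N t = (\<Sum>i<N. if i = 0 then (t 0)\<^sup>2 else 0)"
        unfolding sqN_def by (rule sum.cong) (use supp True in auto)
      then have "(t 0)\<^sup>2 = 1" using sq N0 by simp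
      then have "t 0 = 1 \<or> t 0 = -1" by (simp add: power2_eq_1_iff)
      then show "(\<integral>\<^sup>+x. f (ipN N t x, sqN N x) \<partial>PiM {..<N} (\<lambda>_. lborel)) = (\<integral>\<^sup>+x. f (x 0, sqN N x) \<partial>PiM {..<N} (\<lambda>_. lborel))"
      proof
        assume "t 0 = 1" then show ?thesis by (simp add: ip)
      next
        assume t0: "t 0 = -1"
        have sqr: "sqN N (x(0 := - x 0)) = sqN N x" for x
          unfolding sqN_def by (rule sum.cong) auto
        have m0: "(\<lambda>x. f (x 0, sqN N x)) \<in> borel_measurable (PiM {..<N} (\<lambda>_. lborel))"
        proof -
          have c0: "(\<lambda>x. x 0) \<in> measurable (PiM {..<N} (\<lambda>_. lborel)) (lborel::real measure)"
            by (rule measurable_component_singleton) (use N0 in simp)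
          have cs: "(\<lambda>x. sqN N x) \<in> borel_measurable (PiM {..<N} (\<lambda>_. lborel))"
            unfolding sqN_def by measurable
          have "(\<lambda>x. (x 0, sqN N x)) \<in> measurable (PiM {..<N} (\<lambda>_. lborel)) borel"
            using c0 cs by (simp add: borel_prod[symmetric])
          from measurable_comp[OF this fm] show ?thesis by (simp add: comp_def)
        qed
        have "(\<integral>\<^sup>+x. f (ipN N t x, sqN N x) \<partial>PiM {..<N} (\<lambda>_. lborel))
           = (\<integral>\<^sup>+x. (\<lambda>x. f (x 0, sqN N x)) (x(0 := - x 0)) \<partial>PiM {..<N} (\<lambda>_. lborel))"
          by (simp add: ip t0 sqr)
        also have "\<dots> = (\<integral>\<^sup>+x. f (x 0, sqN N x) \<partial>PiM {..<N} (\<lambda>_. lborel))"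
          by (rule reflect_inv[OF _ _ m0]) (use N0 in auto)
        finally show ?thesis .
      qed
    qed
  next
    case False
    then have k1: "1 \<le> k" and kN: "k < N" using Suc.prems by auto
    note IH = Suc.IH[OF k1 less_imp_le[OF kN]]
    show ?thesis
    proof (intro allI impI)
      fix t :: "nat \<Rightarrow> real"
      assume supp: "\<forall>i. Suc k \<le> i \<longrightarrow> i < N \<longrightarrow> t i = 0" and sq: "sqN N t = 1"
      show "(\<integral>\<^sup>+x. f (ipN N t x, sqN N x) \<partial>PiM {..<N} (\<lambda>_. lborel)) = (\<integral>\<^sup>+x. f (x 0, sqN N x) \<partial>PiM {..<N} (\<lambda>_. lborel))"
      proof (cases "t k = 0")
        case True
        have "\<forall>i. k \<le> i \<longrightarrow> i < N \<longrightarrow> t i = 0"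
          using supp True by (metis Suc_leI le_neq_implies_less)
        then show ?thesis using IH sq by blast
      next
        case tk: False
        define r where "r = sqrt ((t 0)\<^sup>2 + (t k)\<^sup>2)"
        have r0: "r > 0" unfolding r_def using tk by (simp add: add_nonneg_pos)
        have r2: "r\<^sup>2 = (t 0)\<^sup>2 + (t k)\<^sup>2" unfolding r_def by simp
        define a where "a = t 0 / r"
        define b where "b = t k / r"
        have ab: "a\<^sup>2 + b\<^sup>2 = 1" unfolding a_def b_def using r0 r2
          by (simp add: power_divide add_divide_distrib[symmetric]) (use tk in auto)
        define t' where "t' = rot 0 k a b t"
        have t'k: "t' k = 0" unfolding t'_def rot_def a_def b_def using k1
          by (simp add: field_simps)
        have supp': "\<forall>i. k \<le> i \<longrightarrow> i < N \<longrightarrow> t' i = 0"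
        proof (intro allI impI)
          fix i assume "k \<le> i" "i < N"
          show "t' i = 0"
          proof (cases "i = k")
            case True then show ?thesis using t'k by simp
          next
            case False
            then have "Suc k \<le> i" "i \<noteq> 0" using \<open>k \<le> i\<close> k1 by auto
            then show ?thesis unfolding t'_def rot_def using supp \<open>i < N\<close> False by simp
          qed
        qed
        have k0: "0 \<noteq> k" using k1 by simp
        have sq': "sqN N t' = 1" unfolding t'_def using rot_sq[OF _ kN k0 ab] kN sq by simp
        have eqx: "f (ipN N t x, sqN N x) = (\<lambda>y. f (ipN N t' y, sqN N y)) (rot 0 k a b x)" for x
          unfolding t'_def using rot_ip[OF _ kN k0 ab, of t x] rot_sq[OF _ kN k0 ab, of x] kN by simp
        have "(\<integral>\<^sup>+x. f (ipN N t x, sqN N x) \<partial>PiM {..<N} (\<lambda>_. lborel))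
           = (\<integral>\<^sup>+x. (\<lambda>y. f (ipN N t' y, sqN N y)) (rot 0 k a b x) \<partial>PiM {..<N} (\<lambda>_. lborel))"
          by (simp only: eqx)
        also have "\<dots> = (\<integral>\<^sup>+x. f (ipN N t' x, sqN N x) \<partial>PiM {..<N} (\<lambda>_. lborel))"
          by (rule givens[OF _ _ _ k0 ab hm]) (use kN in auto)
        also have "\<dots> = (\<integral>\<^sup>+x. f (x 0, sqN N x) \<partial>PiM {..<N} (\<lambda>_. lborel))"
          using IH supp' sq' by blast
        finally show ?thesis .
      qed
    qed
  qed
qed

lemma rot_reduce:
  fixes f :: "real \<times> real \<Rightarrow> ennreal"
  assumes "f \<in> borel_measurable borel" "1 \<le> N" "sqN N t = 1"
  shows "(\<integral>\<^sup>+x. f (ipN N t x, sqN N x) \<partial>PiM {..<N} (\<lambda>_. lborel)) = (\<integral>\<^sup>+x. f (x 0, sqN N x) \<partial>PiM {..<N} (\<lambda>_. lborel))"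
  using rot_reduce_aux[OF assms(1) assms(2) order_refl] assms(3) by auto



lemma sqN_upd0:
  assumes "1 \<le> N"
  shows "sqN N (x(0:=y)) = y\<^sup>2 + (\<Sum>i\<in>{..<N} - {0}. (x i)\<^sup>2)"
proof -
  have A: "{..<N} = insert 0 ({..<N} - {0})" using assms by (cases N) auto
  have "sqN N (x(0:=y)) = (\<Sum>i\<in>insert 0 ({..<N} - {0}). ((x(0:=y)) i)\<^sup>2)"
    unfolding sqN_def by (subst A) simp
  also have "\<dots> = y\<^sup>2 + (\<Sum>i\<in>{..<N} - {0}. ((x(0:=y)) i)\<^sup>2)"
    by (subst sum.insert) auto
  also have "(\<Sum>i\<in>{..<N} - {0}. ((x(0:=y)) i)\<^sup>2) = (\<Sum>i\<in>{..<N} - {0}. (x i)\<^sup>2)"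
    by (intro sum.cong) auto
  finally show ?thesis .
qed

lemma split0:
  fixes N :: nat
  assumes N: "1 \<le> N" and gm: "g \<in> borel_measurable (PiM {..<N} (\<lambda>_. lborel::real measure))"
  shows "(\<integral>\<^sup>+x. g x \<partial>PiM {..<N} (\<lambda>_. lborel)) =
    (\<integral>\<^sup>+y. \<integral>\<^sup>+x. g (x(0:=y)) \<partial>PiM ({..<N} - {0}) (\<lambda>_. lborel) \<partial>lborel)"
proof -
  interpret PB: product_sigma_finite "\<lambda>_. lborel::real measure" by standard
  have A: "{..<N} = insert 0 ({..<N} - {0})" using N by auto
  have gm': "g \<in> borel_measurable (PiM (insert 0 ({..<N} - {0})) (\<lambda>_. lborel::real measure))"
    using gm A by simp
  show ?thesis
    by (subst A, subst PB.product_nn_integral_insert_rev[OF _ _ gm']) auto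
qed

lemma ball_upper:
  assumes N: "1 \<le> N"
  shows "emeasure (PiM {..<N} (\<lambda>_. lborel)) {x \<in> space (PiM {..<N} (\<lambda>_. lborel)). sqN N x \<le> 1}
     \<le> ennreal (2 * unit_ball_vol (real (N - 1)))"
proof -
  let ?P = "PiM {..<N} (\<lambda>_. lborel::real measure)"
  let ?Q = "PiM ({..<N} - {0}) (\<lambda>_. lborel::real measure)"
  define Bl where "Bl = {f. sqrt (\<Sum>i\<in>{..<N} - {0}. (f i)\<^sup>2) \<le> 1} \<inter> space ?Q"
  have cardA: "card ({..<N} - {0}) = N - 1" using N by simp
  have Bl: "emeasure ?Q Bl = ennreal (unit_ball_vol (real (N - 1)))"
    unfolding Bl_def using emeasure_cball_aux[of "{..<N} - {0}" 1] cardA by simp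
  have Blm: "Bl \<in> sets ?Q" unfolding Bl_def by measurable
  have sm: "{x \<in> space ?P. sqN N x \<le> 1} \<in> sets ?P" unfolding sqN_def by measurable
  have "emeasure ?P {x \<in> space ?P. sqN N x \<le> 1} = (\<integral>\<^sup>+x. indicator {x \<in> space ?P. sqN N x \<le> 1} x \<partial>?P)"
    using sm by simp
  also have "\<dots> = (\<integral>\<^sup>+y. \<integral>\<^sup>+x. indicator {x \<in> space ?P. sqN N x \<le> 1} (x(0:=y)) \<partial>?Q \<partial>lborel)"
    by (rule split0[OF N]) (use sm in simp)
  also have "\<dots> \<le> (\<integral>\<^sup>+(y::real). \<integral>\<^sup>+x. indicator {-1..1} y * indicator Bl x \<partial>?Q \<partial>lborel)"
  proof (rule nn_integral_mono)
    fix y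
    show "(\<integral>\<^sup>+x. indicator {x \<in> space ?P. sqN N x \<le> 1} (x(0:=y)) \<partial>?Q) \<le> (\<integral>\<^sup>+x. indicator {-1..1} y * indicator Bl x \<partial>?Q)"
    proof (rule nn_integral_mono)
    fix x assume x: "x \<in> space ?Q"
    show "indicator {x \<in> space ?P. sqN N x \<le> 1} (x(0:=y)) \<le> (indicator {-1..1} y * indicator Bl x :: ennreal)"
    proof (cases "sqN N (x(0:=y)) \<le> 1")
      case True
      then have h: "y\<^sup>2 + (\<Sum>i\<in>{..<N} - {0}. (x i)\<^sup>2) \<le> 1" using sqN_upd0[OF N] by simp
      have s0: "0 \<le> (\<Sum>i\<in>{..<N} - {0}. (x i)\<^sup>2)" by (simp add: sum_nonneg)
      have "y\<^sup>2 \<le> 1" using h s0 by linarith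
      then have "y \<in> {-1..1}" by (simp add: abs_square_le_1 abs_le_iff) 
      moreover have "(\<Sum>i\<in>{..<N} - {0}. (x i)\<^sup>2) \<le> 1" using h zero_le_power2[of y] by linarith
      then have "x \<in> Bl" unfolding Bl_def using x by auto
      ultimately show ?thesis by (simp add: indicator_def)
    qed (simp add: indicator_def)
  qed
  qed
  also have "\<dots> = (\<integral>\<^sup>+(y::real). indicator {-1..1} y * emeasure ?Q Bl \<partial>lborel)"
    by (rule nn_integral_cong, rule nn_integral_cmult_indicator[OF Blm])
  also have "\<dots> = emeasure ?Q Bl * emeasure lborel {-1..(1::real)}"
    by (subst mult.commute) (simp add: nn_integral_cmult_indicator)
  also have "\<dots> = ennreal (2 * unit_ball_vol (real (N - 1)))"
  proof -
    have "ennreal (2 * unit_ball_vol (real (N - 1))) = ennreal 2 * ennreal (unit_ball_vol (real (N - 1)))"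
      by (rule ennreal_mult) auto
    then show ?thesis using Bl by (simp add: mult.commute)
  qed
  finally show ?thesis .
qed



lemma cone_pt:
  fixes y T th :: real
  assumes th: "0 < th" "th < pi/2" and lo: "0 < lo" "lo \<le> y" "y \<le> cos th"
    and rho: "cos th * rho = sin th * lo" and T: "0 \<le> T" "T \<le> rho\<^sup>2" and rho0: "0 \<le> rho"
  shows "0 < y\<^sup>2 + T \<and> y\<^sup>2 + T \<le> 1 \<and> cos th * sqrt (y\<^sup>2 + T) \<le> y"
proof -
  have c0: "cos th > 0" using th by (simp add: cos_gt_zero_pi)
  have s0: "sin th > 0" using th by (simp add: sin_gt_zero)
  have y0: "y > 0" using lo by linarith
  have "(cos th)\<^sup>2 * T \<le> (cos th)\<^sup>2 * rho\<^sup>2" using T(2) by (simp add: mult_left_mono)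
  also have "\<dots> = (sin th * lo)\<^sup>2" using rho by (simp add: power_mult_distrib[symmetric])
  also have "\<dots> \<le> (sin th * y)\<^sup>2"
    using lo s0 by (intro power_mono mult_left_mono) auto
  finally have k1: "(cos th)\<^sup>2 * T \<le> (sin th)\<^sup>2 * y\<^sup>2" by (simp add: power_mult_distrib)
  have k2: "(cos th)\<^sup>2 * (y\<^sup>2 + T) \<le> y\<^sup>2"
  proof -
    have "(cos th)\<^sup>2 * (y\<^sup>2 + T) = (cos th)\<^sup>2 * y\<^sup>2 + (cos th)\<^sup>2 * T" by (simp add: algebra_simps)
    also have "\<dots> \<le> (cos th)\<^sup>2 * y\<^sup>2 + (sin th)\<^sup>2 * y\<^sup>2" using k1 by simp
    also have "\<dots> = y\<^sup>2" by (simp add: distrib_right[symmetric])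
    finally show ?thesis .
  qed
  have k3: "y\<^sup>2 \<le> (cos th)\<^sup>2" using lo y0 by (intro power_mono) auto
  have "(cos th)\<^sup>2 * (y\<^sup>2 + T) \<le> (cos th)\<^sup>2 * 1" using k2 k3 by simp
  then have k4: "y\<^sup>2 + T \<le> 1" using c0 by (simp add: mult_le_cancel_left)
  have "cos th * sqrt (y\<^sup>2 + T) = sqrt ((cos th)\<^sup>2 * (y\<^sup>2 + T))"
    using c0 by (simp add: real_sqrt_mult)
  also have "\<dots> \<le> sqrt (y\<^sup>2)" using k2 by (rule real_sqrt_le_mono)
  also have "\<dots> = y" using y0 by simp
  finally show ?thesis using k4 y0 T by (simp add: add_pos_nonneg)
qed

lemma cone_lower:
  assumes N: "1 \<le> N" and th: "0 < th" "th < pi/2"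
  shows "ennreal (cos th / (N+1) * unit_ball_vol (real (N-1)) * (sin th * N/(N+1))^(N-1)) \<le>
    emeasure (PiM {..<N} (\<lambda>_. lborel))
      {x \<in> space (PiM {..<N} (\<lambda>_. lborel)). 0 < sqN N x \<and> sqN N x \<le> 1 \<and> cos th * sqrt (sqN N x) \<le> x 0}"
proof -
  let ?P = "PiM {..<N} (\<lambda>_. lborel::real measure)"
  let ?Q = "PiM ({..<N} - {0}) (\<lambda>_. lborel::real measure)"
  define C0 where "C0 = {x \<in> space ?P. 0 < sqN N x \<and> sqN N x \<le> 1 \<and> cos th * sqrt (sqN N x) \<le> x 0}"
  define lo where "lo = cos th * N / (N+1)"
  define rho where "rho = sin th * N / (N+1)"
  have c0: "cos th > 0" using th by (simp add: cos_gt_zero_pi)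
  have s0: "sin th > 0" using th by (simp add: sin_gt_zero)
  have Npos: "real N > 0" using N by simp
  have lo0: "lo > 0" unfolding lo_def using c0 Npos by simp
  have rho0: "rho > 0" unfolding rho_def using s0 Npos by simp
  have lohi: "lo \<le> cos th" unfolding lo_def using c0 by (simp add: field_simps)
  have rholo: "cos th * rho = sin th * lo" unfolding rho_def lo_def by simp
  have width: "cos th - lo = cos th / (N+1)" unfolding lo_def by (simp add: field_simps)
  define Bl where "Bl = {f. sqrt (\<Sum>i\<in>{..<N} - {0}. (f i)\<^sup>2) \<le> rho} \<inter> space ?Q"
  have cardA: "card ({..<N} - {0}) = N - 1" using N by simp
  have Bl: "emeasure ?Q Bl = ennreal (unit_ball_vol (real (N - 1)) * rho ^ (N-1))"
    unfolding Bl_def using emeasure_cball_aux[of "{..<N} - {0}" rho] cardA rho0 by simp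
  have Blm: "Bl \<in> sets ?Q" unfolding Bl_def by measurable
  have sm: "C0 \<in> sets ?P"
  proof -
    have c0m: "(\<lambda>x. x 0) \<in> measurable ?P (lborel::real measure)"
      by (rule measurable_component_singleton) (use N in auto)
    have cs: "(\<lambda>x. sqN N x) \<in> borel_measurable ?P" unfolding sqN_def by measurable
    have f: "(\<lambda>x. (sqN N x, x 0)) \<in> measurable ?P (borel \<Otimes>\<^sub>M borel)"
      using c0m cs by (intro measurable_Pair) auto
    define D where "D = {p::real\<times>real \<in> space (borel \<Otimes>\<^sub>M borel). 0 < fst p \<and> fst p \<le> 1 \<and> cos th * sqrt (fst p) \<le> snd p}"
    have Dm: "D \<in> sets (borel \<Otimes>\<^sub>M borel)" unfolding D_def by measurable
    have "C0 = (\<lambda>x. (sqN N x, x 0)) -` D \<inter> space ?P" unfolding C0_def D_def by (auto simp: space_pair_measure)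
    then show ?thesis using measurable_sets[OF f Dm] by simp
  qed
  have "(\<integral>\<^sup>+(y::real). \<integral>\<^sup>+x. indicator {lo..cos th} y * indicator Bl x \<partial>?Q \<partial>lborel)
      \<le> (\<integral>\<^sup>+y. \<integral>\<^sup>+x. indicator C0 (x(0:=y)) \<partial>?Q \<partial>lborel)"
  proof (rule nn_integral_mono)
    fix y :: real
    show "(\<integral>\<^sup>+x. indicator {lo..cos th} y * indicator Bl x \<partial>?Q) \<le> (\<integral>\<^sup>+x. indicator C0 (x(0:=y)) \<partial>?Q)"
    proof (rule nn_integral_mono)
      fix x assume x: "x \<in> space ?Q"
      show "(indicator {lo..cos th} y * indicator Bl x :: ennreal) \<le> indicator C0 (x(0:=y))"
      proof (cases "y \<in> {lo..cos th} \<and> x \<in> Bl")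
        case True
        define T where "T = (\<Sum>i\<in>{..<N} - {0}. (x i)\<^sup>2)"
        have T0: "0 \<le> T" unfolding T_def by (simp add: sum_nonneg)
        have "sqrt T \<le> rho" using True unfolding Bl_def T_def by simp
        then have Tr: "T \<le> rho\<^sup>2" using T0 rho0 by (simp add: real_sqrt_le_iff')
        have sq: "sqN N (x(0:=y)) = y\<^sup>2 + T" unfolding T_def by (rule sqN_upd0[OF N])
        have pt: "0 < y\<^sup>2 + T \<and> y\<^sup>2 + T \<le> 1 \<and> cos th * sqrt (y\<^sup>2 + T) \<le> y"
          by (rule cone_pt[OF th lo0 _ _ rholo T0 Tr]) (use True rho0 in auto)
        have sp: "x(0:=y) \<in> space ?P"
          using x N by (auto simp: space_PiM PiE_def extensional_def)
        have "x(0:=y) \<in> C0" unfolding C0_def using sp pt sq by simp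
        then show ?thesis using True by (simp add: indicator_def)
      qed (auto simp: indicator_def)
    qed
  qed
  also have "\<dots> = (\<integral>\<^sup>+x. indicator C0 x \<partial>?P)"
    by (rule split0[OF N, symmetric]) (use sm in simp)
  also have "\<dots> = emeasure ?P C0" using sm by simp
  finally have main: "(\<integral>\<^sup>+(y::real). \<integral>\<^sup>+x. indicator {lo..cos th} y * indicator Bl x \<partial>?Q \<partial>lborel) \<le> emeasure ?P C0" .
  have "(\<integral>\<^sup>+(y::real). \<integral>\<^sup>+x. indicator {lo..cos th} y * indicator Bl x \<partial>?Q \<partial>lborel)
       = (\<integral>\<^sup>+(y::real). indicator {lo..cos th} y * emeasure ?Q Bl \<partial>lborel)"
    by (rule nn_integral_cong, rule nn_integral_cmult_indicator[OF Blm])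
  also have "\<dots> = emeasure ?Q Bl * emeasure lborel {lo..cos th}"
    by (subst mult.commute) (simp add: nn_integral_cmult_indicator)
  also have "\<dots> = ennreal (unit_ball_vol (real (N - 1)) * rho ^ (N-1)) * ennreal (cos th / (N+1))"
    using Bl lohi width by simp
  also have "\<dots> = ennreal (cos th / (N+1) * unit_ball_vol (real (N-1)) * (sin th * N/(N+1))^(N-1))"
    using c0 rho0 by (subst ennreal_mult'[symmetric]) (auto simp: rho_def mult_ac)
  finally show ?thesis using main unfolding C0_def by (simp add: add.commute)
qed



lemma averaging:
  fixes N :: nat and S th :: real and s :: "real \<Rightarrow> nat \<Rightarrow> real"
  assumes N: "1 \<le> N" and S: "S > 0"
    and sm: "\<forall>i<N. (\<lambda>u. s u i) \<in> borel_measurable (restrict_space lborel {0..<1})"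
    and sn: "\<forall>u\<in>{0..<1}. vnorm N (s u) = S" and th: "0 < th" "th < pi/2"
  shows "\<exists>g. vnorm N g = 1 \<and>
     (cos th / (N+1) * unit_ball_vol (real (N-1)) * (sin th * N/(N+1))^(N-1)) / (2 * (2 * unit_ball_vol (real (N-1))))
       \<le> measure lborel {u \<in> {0..<1}. S * cos th \<le> vinner N (s u) g}"
proof -
  define L where "L = cos th / (N+1) * unit_ball_vol (real (N-1)) * (sin th * N/(N+1))^(N-1)"
  define W where "W = 2 * unit_ball_vol (real (N-1))"
  define U where "U = restrict_space lborel {0..<1::real}"
  let ?P = "PiM {..<N} (\<lambda>_. lborel::real measure)"
  have c0: "cos th > 0" using th by (simp add: cos_gt_zero_pi)
  have s0: "sin th > 0" using th by (simp add: sin_gt_zero)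
  have Vpos: "unit_ball_vol (real (N-1)) > 0" by simp
  have L0: "L > 0" unfolding L_def using c0 s0 Vpos N by (intro mult_pos_pos divide_pos_pos zero_less_power) auto
  have W0: "W > 0" unfolding W_def using Vpos by simp
  have spU: "space U = {0..<1}" unfolding U_def by (simp add: space_restrict_space)
  have sfU: "sigma_finite_measure U" unfolding U_def
    by (rule sigma_finite_measure_restrict_space[OF sigma_finite_lborel]) simp
  interpret PB: product_sigma_finite "\<lambda>_. lborel::real measure" by standard
  have sfP: "sigma_finite_measure ?P" by (rule PB.sigma_finite) simp
  interpret UP: pair_sigma_finite U ?P using sfU sfP by (simp add: pair_sigma_finite_def)
  have smi[measurable]: "\<And>i. i \<in> {..<N} \<Longrightarrow> (\<lambda>u. s u i) \<in> borel_measurable U"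
    using sm unfolding U_def by auto
  have U1: "emeasure U (space U) = 1" unfolding spU U_def
    by (subst emeasure_restrict_space) auto
  define Q where "Q = (\<lambda>(u,g). 0 < sqN N g \<and> sqN N g \<le> 1 \<and> S * cos th * sqrt (sqN N g) \<le> vinner N (s u) g)"
  define F where "F = (\<lambda>u g. if Q (u,g) then 1 else 0 :: ennreal)"
  have sqm[measurable]: "(\<lambda>g. sqN N g) \<in> borel_measurable ?P" unfolding sqN_def by measurable
  have Fm: "(\<lambda>(u,g). F u g) \<in> borel_measurable (U \<Otimes>\<^sub>M ?P)"
  proof -
    have "(\<lambda>p. vinner N (s (fst p)) (snd p)) \<in> borel_measurable (U \<Otimes>\<^sub>M ?P)"
      unfolding vinner_def by measurable
    moreover have "(\<lambda>p. sqN N (snd p)) \<in> borel_measurable (U \<Otimes>\<^sub>M ?P)" by measurable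
    ultimately have "Measurable.pred (U \<Otimes>\<^sub>M ?P) (\<lambda>p. Q p)"
      unfolding Q_def case_prod_beta' by measurable
    then show ?thesis unfolding F_def case_prod_beta' by measurable
  qed
  define C0 where "C0 = {x \<in> space ?P. 0 < sqN N x \<and> sqN N x \<le> 1 \<and> cos th * sqrt (sqN N x) \<le> x 0}"
  define f where "f = (\<lambda>p::real\<times>real. if 0 < snd p \<and> snd p \<le> 1 \<and> cos th * sqrt (snd p) \<le> fst p then 1 else 0 :: ennreal)"
  have fm: "f \<in> borel_measurable borel"
  proof -
    have "f \<in> borel_measurable (borel \<Otimes>\<^sub>M borel)" unfolding f_def by measurable
    then show ?thesis by (simp add: borel_prod)
  qed
  have inner_g: "(\<integral>\<^sup>+g. F u g \<partial>?P) = emeasure ?P C0" if u: "u \<in> space U" for u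
  proof -
    define t where "t = (\<lambda>i. s u i / S)"
    have "vnorm N (s u) = S" using sn u spU by auto
    then have "sqrt (\<Sum>i<N. (s u i)\<^sup>2) = S" unfolding vnorm_def .
    then have ss: "(\<Sum>i<N. (s u i)\<^sup>2) = S\<^sup>2" using S by (metis real_sqrt_ge_zero real_sqrt_pow2 sum_nonneg zero_le_power2)
    have st: "sqN N t = 1" unfolding sqN_def t_def using ss S
      by (simp add: power_divide sum_divide_distrib[symmetric])
    have ipt: "ipN N t g = vinner N (s u) g / S" for g
      unfolding ipN_def vinner_def t_def by (simp add: sum_divide_distrib)
    have "(\<integral>\<^sup>+g. F u g \<partial>?P) = (\<integral>\<^sup>+g. f (ipN N t g, sqN N g) \<partial>?P)"
    proof (rule nn_integral_cong)
      fix g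
      have "(S * cos th * sqrt (sqN N g) \<le> vinner N (s u) g) \<longleftrightarrow> (cos th * sqrt (sqN N g) \<le> vinner N (s u) g / S)"
        using S by (simp add: pos_le_divide_eq mult_ac)
      then show "F u g = f (ipN N t g, sqN N g)" unfolding F_def f_def Q_def by (simp add: ipt)
    qed
    also have "\<dots> = (\<integral>\<^sup>+g. f (g 0, sqN N g) \<partial>?P)" by (rule rot_reduce[OF fm N st])
    also have "\<dots> = (\<integral>\<^sup>+g. indicator C0 g \<partial>?P)"
      by (rule nn_integral_cong) (simp add: f_def C0_def indicator_def)
    also have "\<dots> = emeasure ?P C0"
    proof -
      have c0m: "(\<lambda>x. x 0) \<in> measurable ?P (lborel::real measure)"
        by (rule measurable_component_singleton) (use N in auto)
      have f2: "(\<lambda>x. (sqN N x, x 0)) \<in> measurable ?P (borel \<Otimes>\<^sub>M borel)"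
        using c0m sqm by (intro measurable_Pair) auto
      define D where "D = {p::real\<times>real \<in> space (borel \<Otimes>\<^sub>M borel). 0 < fst p \<and> fst p \<le> 1 \<and> cos th * sqrt (fst p) \<le> snd p}"
      have Dm: "D \<in> sets (borel \<Otimes>\<^sub>M borel)" unfolding D_def by measurable
      have "C0 = (\<lambda>x. (sqN N x, x 0)) -` D \<inter> space ?P" unfolding C0_def D_def by (auto simp: space_pair_measure)
      then have "C0 \<in> sets ?P" using measurable_sets[OF f2 Dm] by simp
      then show ?thesis by simp
    qed
    finally show ?thesis .
  qed
  have total: "(\<integral>\<^sup>+u. \<integral>\<^sup>+g. F u g \<partial>?P \<partial>U) = emeasure ?P C0"
  proof -
    have "(\<integral>\<^sup>+u. \<integral>\<^sup>+g. F u g \<partial>?P \<partial>U) = (\<integral>\<^sup>+u. emeasure ?P C0 \<partial>U)"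
      by (rule nn_integral_cong) (rule inner_g)
    also have "\<dots> = emeasure ?P C0" using U1 by simp
    finally show ?thesis .
  qed
  have LC0: "ennreal L \<le> emeasure ?P C0" using cone_lower[OF N th] unfolding L_def C0_def by (simp add: add.commute)
  define Ag where "Ag = (\<lambda>g. {u \<in> space U. S * cos th * sqrt (sqN N g) \<le> vinner N (s u) g})"
  have Agm: "Ag g \<in> sets U" for g unfolding Ag_def vinner_def by measurable
  have inner_u: "(\<integral>\<^sup>+u. F u g \<partial>U) = (if 0 < sqN N g \<and> sqN N g \<le> 1 then emeasure U (Ag g) else 0)" for g
  proof (cases "0 < sqN N g \<and> sqN N g \<le> 1")
    case True
    have "(\<integral>\<^sup>+u. F u g \<partial>U) = (\<integral>\<^sup>+u. indicator (Ag g) u \<partial>U)"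
      by (rule nn_integral_cong) (use True in \<open>auto simp: F_def Q_def Ag_def indicator_def\<close>)
    also have "\<dots> = emeasure U (Ag g)" using Agm by simp
    finally show ?thesis using True by simp
  next
    case False
    then have "F u g = 0" for u by (auto simp: F_def Q_def)
    then have "(\<integral>\<^sup>+u. F u g \<partial>U) = 0" by simp
    then show ?thesis using False by (simp only: if_False)
  qed
  have "\<exists>g\<in>space ?P. 0 < sqN N g \<and> sqN N g \<le> 1 \<and> ennreal (L / (2*W)) \<le> emeasure U (Ag g)"
  proof (rule ccontr)
    assume "\<not> ?thesis"
    then have small: "\<And>g. g \<in> space ?P \<Longrightarrow> 0 < sqN N g \<Longrightarrow> sqN N g \<le> 1 \<Longrightarrow> emeasure U (Ag g) < ennreal (L / (2*W))"
      by (auto simp: not_le)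
    define Bl where "Bl = {x \<in> space ?P. sqN N x \<le> 1}"
    have Blm: "Bl \<in> sets ?P" unfolding Bl_def by measurable
    have "(\<integral>\<^sup>+g. \<integral>\<^sup>+u. F u g \<partial>U \<partial>?P) \<le> (\<integral>\<^sup>+g. ennreal (L / (2*W)) * indicator Bl g \<partial>?P)"
    proof (rule nn_integral_mono)
      fix g assume g: "g \<in> space ?P"
      show "(\<integral>\<^sup>+u. F u g \<partial>U) \<le> ennreal (L / (2*W)) * indicator Bl g"
        using small[OF g] g by (auto simp: inner_u Bl_def indicator_def less_imp_le)
    qed
    also have "\<dots> = ennreal (L / (2*W)) * emeasure ?P Bl" by (rule nn_integral_cmult_indicator[OF Blm])
    also have "\<dots> \<le> ennreal (L / (2*W)) * ennreal W"
      using ball_upper[OF N] unfolding Bl_def W_def by (intro mult_left_mono) auto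
    also have "\<dots> = ennreal (L / 2)" using W0 L0 by (simp add: ennreal_mult'[symmetric])
    finally have le1: "(\<integral>\<^sup>+g. \<integral>\<^sup>+u. F u g \<partial>U \<partial>?P) \<le> ennreal (L / 2)" .
    have "(\<integral>\<^sup>+g. \<integral>\<^sup>+u. F u g \<partial>U \<partial>?P) = (\<integral>\<^sup>+u. \<integral>\<^sup>+g. F u g \<partial>?P \<partial>U)"
      by (rule UP.Fubini'[OF Fm])
    then have "ennreal L \<le> ennreal (L / 2)" using le1 total LC0 by simp
    then show False using L0 by (simp add: ennreal_le_iff)
  qed
  then obtain g where g: "g \<in> space ?P" "0 < sqN N g" "sqN N g \<le> 1"
    and gbig: "ennreal (L / (2*W)) \<le> emeasure U (Ag g)" by blast
  define r where "r = sqrt (sqN N g)"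
  have r0: "r > 0" unfolding r_def using g by simp
  define g' where "g' = (\<lambda>i. g i / r)"
  have "vnorm N g' = sqrt ((\<Sum>i<N. (g i)\<^sup>2) / r\<^sup>2)"
    unfolding vnorm_def g'_def by (simp add: power_divide sum_divide_distrib)
  also have "\<dots> = 1" using g r0 unfolding r_def sqN_def by simp
  finally have vg: "vnorm N g' = 1" .
  have set_eq: "{u \<in> {0..<1}. S * cos th \<le> vinner N (s u) g'} = Ag g"
  proof -
    have "vinner N (s u) g' = vinner N (s u) g / r" for u
      unfolding vinner_def g'_def by (simp add: sum_divide_distrib)
    moreover have "(S * cos th \<le> v / r) \<longleftrightarrow> (S * cos th * r \<le> v)" for v
      using r0 by (simp add: pos_le_divide_eq)
    ultimately show ?thesis unfolding Ag_def spU r_def by auto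
  qed
  have M1: "measure lborel {u \<in> {0..<1}. S * cos th \<le> vinner N (s u) g'} = measure U (Ag g)"
    unfolding set_eq U_def by (subst measure_restrict_space) (use spU in \<open>auto simp: Ag_def\<close>)
  have M2: "L / (2*W) \<le> measure U (Ag g)"
  proof -
    have fin: "emeasure U (Ag g) \<le> 1"
      using emeasure_space[of U "Ag g"] U1 by simp
    then have "emeasure U (Ag g) < top" using ennreal_one_less_top by (rule le_less_trans)
    then have "emeasure U (Ag g) \<noteq> top" by simp
    then have eq: "emeasure U (Ag g) = ennreal (measure U (Ag g))" by (rule emeasure_eq_ennreal_measure)
    have "ennreal (L / (2*W)) \<le> ennreal (measure U (Ag g))" using gbig eq by simp
    then show ?thesis by (subst (asm) ennreal_le_iff) auto
  qed
  have "L / (2*W) \<le> measure lborel {u \<in> {0..<1}. S * cos th \<le> vinner N (s u) g'}" using M1 M2 by simp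
  then show ?thesis using vg unfolding L_def W_def by blast
qed



lemma einv_le:
  assumes N: "1 \<le> N"
  shows "exp (-1) \<le> (real N / (real N + 1)) ^ (N - 1)"
proof -
  have Np: "real N > 0" using N by simp
  have "1 + 1 / real N \<le> exp (1 / real N)" by (rule exp_ge_add_one_self[of "1/real N", simplified add.commute])
  then have "(1 + 1 / real N) ^ N \<le> exp (1 / real N) ^ N" by (rule power_mono) (use Np in simp)
  also have "\<dots> = exp 1" using Np by (simp add: exp_of_nat_mult[symmetric])
  finally have h: "(1 + 1 / real N) ^ N \<le> exp 1" .
  have eq: "real N / (real N + 1) = inverse (1 + 1 / real N)" using Np by (simp add: field_simps)
  have "exp (-1::real) = inverse (exp 1)" by (rule exp_minus)
  also have "\<dots> \<le> inverse ((1 + 1 / real N) ^ N)"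
    using h Np by (intro le_imp_inverse_le) (auto intro!: zero_less_power add_pos_pos)
  also have "\<dots> = (real N / (real N + 1)) ^ N" by (simp add: eq power_inverse)
  also have "\<dots> \<le> (real N / (real N + 1)) ^ (N - 1)"
    using Np by (intro power_decreasing) auto
  finally show ?thesis .
qed

lemma alg_aux:
  fixes s c e n b :: real
  assumes "s > 0" "c > 0" "e > 0" "n > 0"
  shows "s * b / (n * (4 * e * (s / c))) = (b * c / (4 * n)) * inverse e"
  using assms by (simp add: field_simps)

lemma alg_aux2:
  fixes q c n p V :: real
  assumes "V > 0" "n > 0"
  shows "q * c / (4 * n) * p = (c / n * V * (q * p)) / (2 * (2 * V))"
  using assms by (simp add: field_simps)

lemma final_ineq:
  fixes N :: nat and th :: real
  assumes N: "1 \<le> N" and th: "0 < th" "th < pi/2"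
  shows "exp (real N / 2 * (ln ((sin th)\<^sup>2) - 2 / real N * (ln (real N + 1) + ln (4 * exp 1 * tan th))))
    \<le> (cos th / (N+1) * unit_ball_vol (real (N-1)) * (sin th * N/(N+1))^(N-1)) / (2 * (2 * unit_ball_vol (real (N-1))))"
proof -
  have c0: "cos th > 0" using th by (simp add: cos_gt_zero_pi)
  have s0: "sin th > 0" using th by (simp add: sin_gt_zero)
  have t0: "tan th > 0" using c0 s0 by (simp add: tan_def)
  have Np: "real N > 0" using N by simp
  have V: "unit_ball_vol (real (N-1)) > 0" by simp
  define K where "K = 4 * exp 1 * tan th"
  have K0: "K > 0" unfolding K_def using t0 by simp
  have E: "real N / 2 * (ln ((sin th)\<^sup>2) - 2 / real N * (ln (real N + 1) + ln K))
      = real N * ln (sin th) - ln ((real N + 1) * K)"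
  proof -
    have l1: "ln ((sin th)\<^sup>2) = 2 * ln (sin th)" using s0 by (simp add: ln_realpow)
    have l2: "ln ((real N + 1) * K) = ln (real N + 1) + ln K" using K0 by (simp add: ln_mult)
    show ?thesis unfolding l1 l2 using Np by (simp add: field_simps)
  qed
  have "exp (real N / 2 * (ln ((sin th)\<^sup>2) - 2 / real N * (ln (real N + 1) + ln K)))
      = exp (real N * ln (sin th)) / exp (ln ((real N + 1) * K))" unfolding E by (rule exp_diff)
  also have "\<dots> = (sin th) ^ N / ((real N + 1) * K)"
    using s0 K0 Np by (simp add: exp_ln exp_of_nat_mult[symmetric] ln_realpow[symmetric])
  also have "\<dots> = ((sin th) ^ (N-1) * cos th / (4 * (real N + 1))) * exp (-1)"
  proof -
    have "(sin th) ^ N = sin th * (sin th) ^ (N-1)" using N by (metis Suc_diff_1 less_le_trans power_Suc zero_less_one)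
    then show ?thesis unfolding K_def tan_def exp_minus
      using alg_aux[OF s0 c0 exp_gt_zero[of 1], of "real N + 1" "(sin th) ^ (N-1)"] Np
      by (simp add: mult_ac)
  qed
  also have "\<dots> \<le> ((sin th) ^ (N-1) * cos th / (4 * (real N + 1))) * (real N / (real N + 1)) ^ (N - 1)"
    using einv_le[OF N] s0 c0 by (intro mult_left_mono) auto
  also have "\<dots> = (cos th / (N+1) * unit_ball_vol (real (N-1)) * (sin th * N/(N+1))^(N-1)) / (2 * (2 * unit_ball_vol (real (N-1))))"
  proof -
    have pw: "(sin th * N/(N+1))^(N-1) = (sin th)^(N-1) * (real N/(real N+1))^(N-1)"
      by (simp add: power_mult_distrib[symmetric] add.commute)
    show ?thesis unfolding pw using alg_aux2[OF V, of "real N + 1"] Np by simp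
  qed
  finally show ?thesis unfolding K_def .
qed

theorem mainTheorem4:
  "\<exists>c :: nat \<Rightarrow> real \<Rightarrow> real.
     (\<forall>\<theta>. 0 < \<theta> \<and> \<theta> < pi / 2 \<longrightarrow>
        (\<lambda>N. c N \<theta>) \<in> \<Theta>(\<lambda>N. ln (real N) / real N)) \<and>
     (\<forall>(N::nat) (S::real) (s :: real \<Rightarrow> nat \<Rightarrow> real) (\<theta>::real).
        N \<ge> 1 \<longrightarrow> S > 0 \<longrightarrow>
        (\<forall>i<N. (\<lambda>u. s u i) \<in> borel_measurable (restrict_space lborel {0..<1})) \<longrightarrow>
        (\<forall>u\<in>{0..<1}. vnorm N (s u) = S) \<longrightarrow>
        0 < \<theta> \<longrightarrow> \<theta> < pi / 2 \<longrightarrow>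
        (\<exists>g :: nat \<Rightarrow> real. vnorm N g = 1 \<and>
           measure lborel {u \<in> {0..<1}. vinner N (s u) g \<ge> S * cos \<theta>}
             \<ge> exp (real N / 2 * (ln ((sin \<theta>)\<^sup>2) - c N \<theta>))))"
proof (intro exI[of _ "\<lambda>N th. 2 / real N * (ln (real N + 1) + ln (4 * exp 1 * tan th))"] conjI allI impI)
  fix th :: real
  define C where "C = ln (4 * exp 1 * tan th)"
  have "(\<lambda>N::nat. 2 / real N * (ln (real N + 1) + C)) \<in> \<Theta>(\<lambda>N. ln (real N) / real N)"
    by real_asymp
  then show "(\<lambda>N. 2 / real N * (ln (real N + 1) + ln (4 * exp 1 * tan th))) \<in> \<Theta>(\<lambda>N. ln (real N) / real N)"
    unfolding C_def .
next
  fix N :: nat and S :: real and s :: "real \<Rightarrow> nat \<Rightarrow> real" and th :: real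
  assume N: "N \<ge> 1" and S: "S > 0"
    and sm: "\<forall>i<N. (\<lambda>u. s u i) \<in> borel_measurable (restrict_space lborel {0..<1})"
    and sn: "\<forall>u\<in>{0..<1}. vnorm N (s u) = S" and th1: "0 < th" and th2: "th < pi / 2"
  obtain g where g: "vnorm N g = 1"
    "(cos th / (N+1) * unit_ball_vol (real (N-1)) * (sin th * N/(N+1))^(N-1)) / (2 * (2 * unit_ball_vol (real (N-1))))
       \<le> measure lborel {u \<in> {0..<1}. S * cos th \<le> vinner N (s u) g}"
    using averaging[OF N S sm sn th1 th2] by blast
  show "\<exists>g. vnorm N g = 1 \<and>
           measure lborel {u \<in> {0..<1}. vinner N (s u) g \<ge> S * cos th}
             \<ge> exp (real N / 2 * (ln ((sin th)\<^sup>2) - 2 / real N * (ln (real N + 1) + ln (4 * exp 1 * tan th))))"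
    using g final_ineq[OF N th1 th2] by (intro exI[of _ g]) auto
qed


end
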